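(* For every $\lambda = ma+nb \in \Lambda^{2,2}_{+}$ (with $m,n\in\mathbb{N}$), the Frobenius complex $\mathcal{F}(\lambda;\Lambda^{2,2})$ is homotopy equivalent to the sphere $S^{m+n-2}$ (where $S^{-1}$ is the empty space).
   Context: $\mathbb{N}=\{0,1,2,\dots\}$. For an additive commutative monoid $\Lambda$ that is cancellative and has no non-trivial invertible elements, define the partial order $\lambda \le \mu$ iff there is $\nu\in\Lambda$ with $\lambda+\nu=\mu$; $\lambda<\mu$ means $\lambda\le\mu$ and $\lambda\neq\mu$. Let $\Lambda_+=\Lambda\setminus\{0\}$. For a poset $P$, $|P|$ denotes the geometric realization of its order complex, and $(x,y)_P=\{z\in P: x<z<y\}$. The Frobenius complex is $\mathcal{F}(\lambda;\Lambda)=|(0,\lambda)_\Lambda|$ for $\lambda\in\Lambda_+$. $\Lambda^{2,2}=\langle a,b\mid 2a=2b\rangle$ is the quotient of the free commutative monoid $\mathbb{N}a\oplus\mathbb{N}b$ by the congruence generated by $\lambda+2a\sim\lambda+2b$ ($\lambda\in\mathbb{N}a\oplus\mathbb{N}b$). *)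

theory Defs
  imports "HOL-Analysis.Analysis"
begin

text \<open>Elements of the free commutative monoid N a + N b are pairs (m,n) = m a + n b.
  The congruence generated by lambda + 2a ~ lambda + 2b.\<close>

inductive cong22 :: "nat \<times> nat \<Rightarrow> nat \<times> nat \<Rightarrow> bool" where
  gen: "cong22 (m + 2, n) (m, n + 2)"
| refl: "cong22 x x"
| sym: "cong22 x y \<Longrightarrow> cong22 y x"
| trans: "cong22 x y \<Longrightarrow> cong22 y z \<Longrightarrow> cong22 x z"
| add: "cong22 x y \<Longrightarrow> cong22 (fst x + fst z, snd x + snd z) (fst y + fst z, snd y + snd z)"

lemma equivp_cong22: "equivp cong22"
  by (intro equivpI reflpI sympI transpI) (auto intro: cong22.intros)

quotient_type lam22 = "nat \<times> nat" / cong22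
  by (rule equivp_cong22)

lift_definition gen22 :: "nat \<Rightarrow> nat \<Rightarrow> lam22" is "\<lambda>m n. (m, n)" .

lift_definition add22 :: "lam22 \<Rightarrow> lam22 \<Rightarrow> lam22"
  is "\<lambda>x y. (fst x + fst y, snd x + snd y)"
proof -
  fix x x' y y' :: "nat \<times> nat"
  assume h1: "cong22 x x'" and h2: "cong22 y y'"
  have "cong22 (fst x + fst y, snd x + snd y) (fst x' + fst y, snd x' + snd y)"
    using cong22.add[OF h1] .
  moreover have "cong22 (fst y + fst x', snd y + snd x') (fst y' + fst x', snd y' + snd x')"
    using cong22.add[OF h2] .
  hence "cong22 (fst x' + fst y, snd x' + snd y) (fst x' + fst y', snd x' + snd y')"
    by (simp add: add.commute)
  ultimately show "cong22 (fst x + fst y, snd x + snd y) (fst x' + fst y', snd x' + snd y')"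
    by (rule cong22.trans)
qed

definition zero22 :: lam22 where "zero22 = gen22 0 0"

definition le22 :: "lam22 \<Rightarrow> lam22 \<Rightarrow> bool" where
  "le22 x y \<longleftrightarrow> (\<exists>z. add22 x z = y)"

definition less22 :: "lam22 \<Rightarrow> lam22 \<Rightarrow> bool" where
  "less22 x y \<longleftrightarrow> le22 x y \<and> x \<noteq> y"

definition open_interval22 :: "lam22 \<Rightarrow> lam22 \<Rightarrow> lam22 set" where
  "open_interval22 x y = {z. less22 x z \<and> less22 z y}"

text \<open>For a poset (P, le), the geometric realization of its order complex (simplices = nonempty
  finite chains) as the set of finitely supported convex weight functions on P whose support is
  a chain, with the subspace topology of the product topology on 'a \<Rightarrow> real. For finite P (the
  only case used) this is the usual realization of a finite simplicial complex.\<close>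
definition order_complex_realization :: "('a \<Rightarrow> 'a \<Rightarrow> bool) \<Rightarrow> 'a set \<Rightarrow> ('a \<Rightarrow> real) topology" where
  "order_complex_realization le P =
     subtopology (powertop_real UNIV)
       {f. (\<forall>x. 0 \<le> f x) \<and> (\<forall>x. x \<notin> P \<longrightarrow> f x = 0) \<and> finite {x. f x \<noteq> 0}
           \<and> sum f {x. f x \<noteq> 0} = 1
           \<and> (\<forall>x y. f x \<noteq> 0 \<longrightarrow> f y \<noteq> 0 \<longrightarrow> le x y \<or> le y x)}"

definition frobenius_complex22 :: "lam22 \<Rightarrow> (lam22 \<Rightarrow> real) topology" where
  "frobenius_complex22 l = order_complex_realization le22 (open_interval22 zero22 l)"

definition sphere_space :: "int \<Rightarrow> (nat \<Rightarrow> real) topology" where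
  "sphere_space d = (if d < 0 then subtopology (powertop_real UNIV) {} else nsphere (nat d))"

end

theory Submission
  imports Defs
begin

lemma cong22_inv: "cong22 x y \<Longrightarrow> fst x + snd x = fst y + snd y \<and> (odd (fst x) \<longleftrightarrow> odd (fst y))"
  by (induction rule: cong22.induct) auto

lemma cong22_shift: "cong22 (m + 2*j, n) (m, n + 2*j)"
proof (induction j arbitrary: m)
  case 0 then show ?case by (simp add: cong22.refl)
next
  case (Suc j)
  have "cong22 (m + 2 + 2*j, n) (m + 2, n + 2*j)" using Suc.IH[of "m+2"] by simp
  moreover have "cong22 (m + 2, n + 2*j) (m, n + 2*j + 2)" using cong22.gen by simp
  ultimately show ?case by (auto intro: cong22.trans simp: algebra_simps)
qed

lemma cong22_iff: "cong22 (m, n) (m', n') \<longleftrightarrow> m + n = m' + n' \<and> (odd m \<longleftrightarrow> odd m')"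
proof
  assume "cong22 (m, n) (m', n')" then show "m + n = m' + n' \<and> (odd m \<longleftrightarrow> odd m')"
    using cong22_inv by fastforce
next
  assume h: "m + n = m' + n' \<and> (odd m \<longleftrightarrow> odd m')"
  show "cong22 (m, n) (m', n')"
  proof (cases "m' \<le> m")
    case True
    then obtain j where "m = m' + 2*j" using h
      by (metis add_diff_inverse_nat dvd_def even_add le_add_diff_inverse not_less) 
    then show ?thesis using h cong22_shift[of m' j n] by (simp add: add.commute)
  next
    case False
    then obtain j where "m' = m + 2*j" using h
      by (metis add_diff_inverse_nat dvd_def even_add le_add_diff_inverse not_less nat_le_linear)
    then show ?thesis using h cong22_shift[of m j n'] by (simp add: cong22.sym add.commute)
  qed
qed

lift_definition deg22 :: "lam22 \<Rightarrow> nat" is "\<lambda>x. fst x + snd x"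
  using cong22_inv by blast
lift_definition odd22 :: "lam22 \<Rightarrow> bool" is "\<lambda>x. odd (fst x)"
  using cong22_inv by blast

lemma gen22_surj: "\<exists>m n. x = gen22 m n"
  by transfer (metis cong22.refl prod.collapse)

lemma deg_gen22[simp]: "deg22 (gen22 m n) = m + n" by transfer simp
lemma odd_gen22[simp]: "odd22 (gen22 m n) = odd m" by transfer simp
lemma gen22_eq: "gen22 m n = gen22 m' n' \<longleftrightarrow> m + n = m' + n' \<and> (odd m \<longleftrightarrow> odd m')"
  by transfer (simp add: cong22_iff)

lemma lam22_eq: "x = y \<longleftrightarrow> deg22 x = deg22 y \<and> odd22 x = odd22 y"
  using gen22_surj[of x] gen22_surj[of y] gen22_eq by auto

lemma add_gen22: "add22 (gen22 m n) (gen22 p q) = gen22 (m + p) (n + q)"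
  by transfer (simp add: cong22.refl)

lemma deg_add22: "deg22 (add22 x y) = deg22 x + deg22 y"
  using gen22_surj[of x] gen22_surj[of y] add_gen22 by auto

lemma deg0: "deg22 z = 0 \<longleftrightarrow> z = zero22"
  using gen22_surj[of z] unfolding zero22_def by (auto simp: gen22_eq)

lemma le22_iff: "le22 x y \<longleftrightarrow> deg22 x < deg22 y \<or> x = y"
proof
  assume "le22 x y"
  then obtain z where z: "add22 x z = y" by (auto simp: le22_def)
  show "deg22 x < deg22 y \<or> x = y"
  proof (cases "deg22 z = 0")
    case True
    then have "z = gen22 0 0" using deg0 zero22_def by simp
    moreover obtain m n where "x = gen22 m n" using gen22_surj by blast
    ultimately show ?thesis using z add_gen22 by auto
  next
    case False then show ?thesis using z deg_add22 by auto
  qed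
next
  assume h: "deg22 x < deg22 y \<or> x = y"
  show "le22 x y"
  proof (cases "x = y")
    case True
    obtain m n where "x = gen22 m n" using gen22_surj by blast
    then have "add22 x (gen22 0 0) = y" using True add_gen22 by simp
    then show ?thesis by (auto simp: le22_def)
  next
    case False
    obtain m n where x: "x = gen22 m n" using gen22_surj by blast
    obtain m' n' where y: "y = gen22 m' n'" using gen22_surj by blast
    define p where "p = (if odd m = odd m' then 0 else 1::nat)"
    define q where "q = m' + n' - m - n - p"
    have "m + n < m' + n'" using h False x y by simp
    then have "add22 x (gen22 p q) = y" unfolding x y add_gen22 gen22_eq p_def q_def by auto
    then show ?thesis by (auto simp: le22_def)
  qed
qed

definition pos22 :: "nat \<Rightarrow> lam22" where "pos22 i = gen22 0 (Suc i)"
definition neg22 :: "nat \<Rightarrow> lam22" where "neg22 i = gen22 1 i"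

lemma pos_neg_simps[simp]: "deg22 (pos22 i) = Suc i" "deg22 (neg22 i) = Suc i"
  "odd22 (pos22 i) = False" "odd22 (neg22 i) = True"
  by (auto simp: pos22_def neg22_def)

lemma pos_neq_neg[simp]: "pos22 i \<noteq> neg22 j" "neg22 j \<noteq> pos22 i"
  by (auto simp: lam22_eq[of "pos22 i"] lam22_eq[of "neg22 j"])

lemma inj_pos: "inj pos22" by (auto simp: inj_def lam22_eq[of "pos22 _"])
lemma inj_neg: "inj neg22" by (auto simp: inj_def lam22_eq[of "neg22 _"])

lemma level_elem: assumes "0 < deg22 x"
  shows "x = (if odd22 x then neg22 (deg22 x - 1) else pos22 (deg22 x - 1))"
  using assms by (auto simp: lam22_eq[of x])

lemma sumT:
  fixes f :: "lam22 \<Rightarrow> real"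
  assumes "\<And>x. \<not> (0 < deg22 x \<and> deg22 x \<le> k) \<Longrightarrow> f x = 0"
  shows "finite {x. f x \<noteq> 0}" "sum f {x. f x \<noteq> 0} = (\<Sum>j<k. f (pos22 j) + f (neg22 j))"
proof -
  let ?T = "pos22 ` {..<k} \<union> neg22 ` {..<k}"
  have sub: "{x. f x \<noteq> 0} \<subseteq> ?T"
  proof
    fix x assume "x \<in> {x. f x \<noteq> 0}"
    then have d: "0 < deg22 x \<and> deg22 x \<le> k" using assms by blast
    then have "deg22 x - 1 < k" by linarith
    then show "x \<in> ?T" using level_elem[of x] d by (auto split: if_splits)
  qed
  have fT: "finite ?T" by simp
  then show "finite {x. f x \<noteq> 0}" using sub finite_subset by blast
  have "sum f {x. f x \<noteq> 0} = sum f ?T"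
    by (rule sum.mono_neutral_left[OF fT sub]) auto
  also have "\<dots> = sum f (pos22 ` {..<k}) + sum f (neg22 ` {..<k})"
    by (rule sum.union_disjoint) auto
  also have "\<dots> = (\<Sum>j<k. f (pos22 j)) + (\<Sum>j<k. f (neg22 j))"
    using inj_pos inj_neg by (simp add: sum.reindex inj_on_def)
  finally show "sum f {x. f x \<noteq> 0} = (\<Sum>j<k. f (pos22 j) + f (neg22 j))"
    by (simp add: sum.distrib)
qed

definition SX :: "nat \<Rightarrow> (lam22 \<Rightarrow> real) set" where
  "SX k = {f. (\<forall>x. 0 \<le> f x) \<and> (\<forall>x. x \<notin> {z. 0 < deg22 z \<and> deg22 z \<le> k} \<longrightarrow> f x = 0)
           \<and> finite {x. f x \<noteq> 0} \<and> sum f {x. f x \<noteq> 0} = 1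
           \<and> (\<forall>x y. f x \<noteq> 0 \<longrightarrow> f y \<noteq> 0 \<longrightarrow> le22 x y \<or> le22 y x)}"

definition SP :: "nat \<Rightarrow> (nat \<Rightarrow> real) set" where
  "SP k = {x. (\<Sum>i\<le>k-1. x i ^ 2) = 1 \<and> (\<forall>i>k-1. x i = 0)}"

definition Phi :: "nat \<Rightarrow> (lam22 \<Rightarrow> real) \<Rightarrow> nat \<Rightarrow> real" where
  "Phi k f i = (if i < k then (f (pos22 i) - f (neg22 i)) / sqrt (\<Sum>j<k. (f (pos22 j) - f (neg22 j))^2) else 0)"

definition Psi :: "nat \<Rightarrow> (nat \<Rightarrow> real) \<Rightarrow> lam22 \<Rightarrow> real" where
  "Psi k h x = (if 0 < deg22 x \<and> deg22 x \<le> k then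
      (if odd22 x then max (- h (deg22 x - 1)) 0 else max (h (deg22 x - 1)) 0) / (\<Sum>j<k. \<bar>h j\<bar>) else 0)"

lemma SX_facts:
  assumes "f \<in> SX k"
  shows "f (pos22 j) = 0 \<or> f (neg22 j) = 0"
    and "(\<Sum>j<k. \<bar>f (pos22 j) - f (neg22 j)\<bar>) = 1"
    and "(\<Sum>j<k. (f (pos22 j) - f (neg22 j))^2) > 0"
proof -
  show F1: "f (pos22 j) = 0 \<or> f (neg22 j) = 0" for j
    using assms unfolding SX_def le22_iff by force
  have nn: "\<And>x. 0 \<le> f x" using assms by (auto simp: SX_def)
  have ab: "\<bar>f (pos22 j) - f (neg22 j)\<bar> = f (pos22 j) + f (neg22 j)" for j
    using F1[of j] nn[of "pos22 j"] nn[of "neg22 j"] by auto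
  have "sum f {x. f x \<noteq> 0} = (\<Sum>j<k. f (pos22 j) + f (neg22 j))"
    by (rule sumT) (use assms in \<open>auto simp: SX_def\<close>)
  then show S1: "(\<Sum>j<k. \<bar>f (pos22 j) - f (neg22 j)\<bar>) = 1"
    using assms by (simp add: ab SX_def)
  then obtain j where "j < k" "f (pos22 j) - f (neg22 j) \<noteq> 0"
    by (metis (no_types, lifting) abs_zero sum.neutral zero_neq_one lessThan_iff)
  then show "(\<Sum>j<k. (f (pos22 j) - f (neg22 j))^2) > 0"
    by (intro sum_pos2[of _ j]) auto
qed

lemma SP_facts:
  assumes "h \<in> SP k" "k \<ge> 1"
  shows "(\<Sum>j<k. h j ^ 2) = 1" "(\<Sum>j<k. \<bar>h j\<bar>) > 0" "\<And>i. i \<ge> k \<Longrightarrow> h i = 0"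
proof -
  have e: "{..k-1} = {..<k}" using assms(2) by auto
  show S: "(\<Sum>j<k. h j ^ 2) = 1" using assms(1) unfolding SP_def e by simp
  show "\<And>i. i \<ge> k \<Longrightarrow> h i = 0" using assms by (auto simp: SP_def)
  obtain j where "j < k" "h j \<noteq> 0"
    using S by (metis (no_types, lifting) power_zero_numeral sum.neutral zero_neq_one lessThan_iff)
  then show "(\<Sum>j<k. \<bar>h j\<bar>) > 0" by (intro sum_pos2[of _ j]) auto
qed

lemma Phi_SP: assumes "f \<in> SX k" "k \<ge> 1" shows "Phi k f \<in> SP k"
proof -
  define D where "D = (\<Sum>j<k. (f (pos22 j) - f (neg22 j))^2)"
  have D: "D > 0" using SX_facts(3)[OF assms(1)] D_def by simp
  have e: "{..k-1} = {..<k}" using assms(2) by auto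
  have "(\<Sum>i\<le>k-1. Phi k f i ^ 2) = (\<Sum>i<k. (f (pos22 i) - f (neg22 i))^2 / D)"
    unfolding e by (intro sum.cong) (use D in \<open>auto simp: Phi_def D_def[symmetric] power_divide\<close>)
  also have "\<dots> = 1" using D by (simp add: sum_divide_distrib[symmetric] D_def)
  finally show ?thesis by (auto simp: SP_def Phi_def)
qed

lemma Psi_pos_neg: "j < k \<Longrightarrow> Psi k h (pos22 j) = max (h j) 0 / (\<Sum>j<k. \<bar>h j\<bar>)"
  "j < k \<Longrightarrow> Psi k h (neg22 j) = max (- h j) 0 / (\<Sum>j<k. \<bar>h j\<bar>)"
  by (auto simp: Psi_def)

lemma Psi_SX: assumes "h \<in> SP k" "k \<ge> 1" shows "Psi k h \<in> SX k"
proof -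
  define s where "s = (\<Sum>j<k. \<bar>h j\<bar>)"
  have s: "s > 0" using SP_facts(2)[OF assms] s_def by simp
  have z: "\<And>x. \<not> (0 < deg22 x \<and> deg22 x \<le> k) \<Longrightarrow> Psi k h x = 0" unfolding Psi_def by auto
  have nn: "\<And>x. 0 \<le> Psi k h x" using s by (auto simp: Psi_def s_def[symmetric])
  have "sum (Psi k h) {x. Psi k h x \<noteq> 0} = (\<Sum>j<k. Psi k h (pos22 j) + Psi k h (neg22 j))"
    by (rule sumT(2)) (use z in auto)
  also have "\<dots> = (\<Sum>j<k. \<bar>h j\<bar> / s)"
    by (intro sum.cong) (auto simp: Psi_pos_neg s_def[symmetric] add_divide_distrib[symmetric])
  also have "\<dots> = 1" using s by (simp add: sum_divide_distrib[symmetric] s_def)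
  finally have S: "sum (Psi k h) {x. Psi k h x \<noteq> 0} = 1" .
  have ch: "le22 x y \<or> le22 y x" if "Psi k h x \<noteq> 0" "Psi k h y \<noteq> 0" for x y
  proof (cases "deg22 x = deg22 y")
    case True
    show ?thesis
    proof (cases "odd22 x = odd22 y")
      case True then show ?thesis using \<open>deg22 x = deg22 y\<close> lam22_eq le22_iff by blast
    next
      case False
      then show ?thesis using that \<open>deg22 x = deg22 y\<close>
        by (auto simp: Psi_def split: if_splits)
    qed
  next
    case False then show ?thesis using le22_iff by auto
  qed
  show ?thesis unfolding SX_def using nn z sumT(1)[of k "Psi k h"] S ch by auto
qed

lemma Psi_Phi: assumes "f \<in> SX k" "k \<ge> 1" shows "Psi k (Phi k f) = f"
proof
  fix x
  define D where "D = (\<Sum>j<k. (f (pos22 j) - f (neg22 j))^2)"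
  have D: "D > 0" using SX_facts(3)[OF assms(1)] D_def by simp
  define c where "c = sqrt D"
  have c: "c > 0" using D c_def by simp
  have ph: "j < k \<Longrightarrow> Phi k f j = (f (pos22 j) - f (neg22 j)) / c" for j
    by (simp add: Phi_def D_def c_def)
  have s: "(\<Sum>j<k. \<bar>Phi k f j\<bar>) = 1 / c"
  proof -
    have "(\<Sum>j<k. \<bar>Phi k f j\<bar>) = (\<Sum>j<k. \<bar>f (pos22 j) - f (neg22 j)\<bar> / c)"
      using c by (intro sum.cong) (auto simp: ph)
    also have "\<dots> = 1 / c" using SX_facts(2)[OF assms(1)] by (simp add: sum_divide_distrib[symmetric])
    finally show ?thesis .
  qed
  have nn: "\<And>x. 0 \<le> f x" using assms by (auto simp: SX_def)
  show "Psi k (Phi k f) x = f x"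
  proof (cases "0 < deg22 x \<and> deg22 x \<le> k")
    case True
    define i where "i = deg22 x - 1"
    have i: "i < k" using True i_def by linarith
    have F1: "f (pos22 i) = 0 \<or> f (neg22 i) = 0" using SX_facts(1)[OF assms(1)] .
    have pi: "Psi k (Phi k f) x = (if odd22 x then max (- Phi k f i) 0 else max (Phi k f i) 0) * c"
      using True c by (simp add: Psi_def s i_def)
    show ?thesis
    proof (cases "odd22 x")
      case True
      then have "x = neg22 i" using level_elem[of x] \<open>0 < deg22 x \<and> deg22 x \<le> k\<close> i_def by auto
      then show ?thesis using pi True ph[OF i] c F1 nn[of "pos22 i"] nn[of "neg22 i"]
        by (auto simp: max_def field_simps)
    next
      case False
      then have "x = pos22 i" using level_elem[of x] \<open>0 < deg22 x \<and> deg22 x \<le> k\<close> i_def by auto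
      then show ?thesis using pi False ph[OF i] c F1 nn[of "pos22 i"] nn[of "neg22 i"]
        by (auto simp: max_def field_simps)
    qed
  next
    case False
    then show ?thesis using assms(1) by (auto simp: Psi_def SX_def)
  qed
qed

lemma Phi_Psi: assumes "h \<in> SP k" "k \<ge> 1" shows "Phi k (Psi k h) = h"
proof
  fix i
  define s where "s = (\<Sum>j<k. \<bar>h j\<bar>)"
  have s: "s > 0" using SP_facts(2)[OF assms] s_def by simp
  have g: "j < k \<Longrightarrow> Psi k h (pos22 j) - Psi k h (neg22 j) = h j / s" for j
    by (simp add: Psi_pos_neg s_def[symmetric] diff_divide_distrib[symmetric] max_def)
  have "(\<Sum>j<k. (Psi k h (pos22 j) - Psi k h (neg22 j))^2) = (\<Sum>j<k. h j ^ 2 / s^2)"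
    by (intro sum.cong) (auto simp: g power_divide)
  also have "\<dots> = 1 / s^2" using SP_facts(1)[OF assms] by (simp add: sum_divide_distrib[symmetric])
  finally have D: "sqrt (\<Sum>j<k. (Psi k h (pos22 j) - Psi k h (neg22 j))^2) = 1 / s"
    using s by (simp add: real_sqrt_divide)
  show "Phi k (Psi k h) i = h i"
    using s SP_facts(3)[OF assms] unfolding Phi_def D by (auto simp: g)
qed

lemma Phi_cont: assumes "k \<ge> 1"
  shows "continuous_map (subtopology (powertop_real UNIV) (SX k)) (subtopology (powertop_real UNIV) (SP k)) (Phi k)"
  unfolding continuous_map_in_subtopology
proof
  show "continuous_map (subtopology (powertop_real UNIV) (SX k)) (powertop_real UNIV) (Phi k)"
    unfolding continuous_map_componentwise_UNIV
  proof
    fix i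
    show "continuous_map (subtopology (powertop_real UNIV) (SX k)) euclideanreal (\<lambda>x. Phi k x i)"
    proof (cases "i < k")
      case True
      then show ?thesis unfolding Phi_def
        using SX_facts(3)
        by (auto intro!: continuous_intros) (metis less_irrefl)
    next
      case False then show ?thesis by (simp add: Phi_def)
    qed
  qed
  show "Phi k \<in> topspace (subtopology (powertop_real UNIV) (SX k)) \<rightarrow> SP k"
    using Phi_SP assms by auto
qed

lemma Psi_cont: assumes "k \<ge> 1"
  shows "continuous_map (subtopology (powertop_real UNIV) (SP k)) (subtopology (powertop_real UNIV) (SX k)) (Psi k)"
  unfolding continuous_map_in_subtopology
proof
  show "continuous_map (subtopology (powertop_real UNIV) (SP k)) (powertop_real UNIV) (Psi k)"
    unfolding continuous_map_componentwise_UNIV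
  proof
    fix x
    show "continuous_map (subtopology (powertop_real UNIV) (SP k)) euclideanreal (\<lambda>h. Psi k h x)"
      unfolding Psi_def
      using SP_facts(2)[OF _ assms]
      by (auto intro!: continuous_intros) (metis less_irrefl)
  qed
  show "Psi k \<in> topspace (subtopology (powertop_real UNIV) (SP k)) \<rightarrow> SX k"
    using Psi_SX assms by auto
qed

lemma homeo_main: assumes "k \<ge> 1"
  shows "subtopology (powertop_real UNIV) (SX k) homeomorphic_space subtopology (powertop_real UNIV) (SP k)"
  unfolding homeomorphic_space_def homeomorphic_maps_def
  using Phi_cont[OF assms] Psi_cont[OF assms] Psi_Phi[OF _ assms] Phi_Psi[OF _ assms]
  by auto

lemma SX0: "SX 0 = {}"
proof -
  have "f \<in> SX 0 \<Longrightarrow> False" for f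
  proof -
    assume f: "f \<in> SX 0"
    then have "\<And>x. f x = 0" by (auto simp: SX_def)
    then show False using f by (simp add: SX_def)
  qed
  then show ?thesis by blast
qed

theorem theorem2p8:
  fixes m n :: nat
  assumes "gen22 m n \<noteq> zero22"
  shows "frobenius_complex22 (gen22 m n) homotopy_equivalent_space
           sphere_space (int m + int n - 2)"
proof -
  define k where "k = m + n - 1"
  have mn: "m + n \<ge> 1" using assms deg0[of "gen22 m n"] by auto
  have dz: "deg22 zero22 = 0" using deg0 by simp
  have oi: "open_interval22 zero22 (gen22 m n) = {z. 0 < deg22 z \<and> deg22 z \<le> k}"
    unfolding open_interval22_def less22_def le22_iff k_def using mn
    by (auto simp: dz)
  have F: "frobenius_complex22 (gen22 m n) = subtopology (powertop_real UNIV) (SX k)"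
    unfolding frobenius_complex22_def order_complex_realization_def oi SX_def by simp
  show ?thesis
  proof (cases "k = 0")
    case True
    then have "m + n = 1" using mn k_def by simp
    then have S: "sphere_space (int m + int n - 2) = trivial_topology"
      by (simp add: sphere_space_def)
    show ?thesis unfolding F True SX0 S
      by (intro homeomorphic_imp_homotopy_equivalent_space) (simp add: homeomorphic_empty_space_eq)
  next
    case False
    then have "nat (int m + int n - 2) = k - 1" using k_def by simp
    moreover have "int m + int n - 2 \<ge> 0" using False k_def by simp
    ultimately have S: "sphere_space (int m + int n - 2) = subtopology (powertop_real UNIV) (SP k)"
      by (simp add: sphere_space_def nsphere SP_def)
    show ?thesis unfolding F S
      using homeo_main[of k] False by (intro homeomorphic_imp_homotopy_equivalent_space) simp
  qed
qed

end
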